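(* Let $R$ be a $*$-reducing ring and let $p,q\in R$ be projections. Then the following are equivalent: (1) $p(1-q)$ is MP invertible; (2) $p-q$ is MP invertible; (3) $(1-p)q$ is MP invertible.
   Context: $R$ is an associative ring with identity $1$ and an involution $a\mapsto a^*$ (satisfying $(a^* )^*=a$, $(a+b)^*=a^*+b^*$, $(ab)^*=b^*a^*$). $R$ is $*$-reducing if $a^*a=0$ implies $a=0$ for all $a\in R$. An element $a$ is MP invertible if there is $b$ with $aba=a$, $bab=b$, $(ab)^*=ab$, $(ba)^*=ba$; this $b$ is unique and written $a^{\dagger}$. A projection is an element $p$ with $p^2=p=p^*$. *)

theory Defs
  imports Main
begin

class inv_ring = ring_1 +
  fixes star :: "'a \<Rightarrow> 'a"
  assumes star_star: "star (star a) = a"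
    and star_add: "star (a + b) = star a + star b"
    and star_mult: "star (a * b) = star b * star a"

definition star_reducing :: "'a::inv_ring itself \<Rightarrow> bool" where
  "star_reducing _ \<longleftrightarrow> (\<forall>a::'a. star a * a = 0 \<longrightarrow> a = 0)"

definition is_mp_inverse :: "'a::inv_ring \<Rightarrow> 'a \<Rightarrow> bool" where
  "is_mp_inverse a b \<longleftrightarrow> a * b * a = a \<and> b * a * b = b
     \<and> star (a * b) = a * b \<and> star (b * a) = b * a"

definition mp_invertible :: "'a::inv_ring \<Rightarrow> bool" where
  "mp_invertible a \<longleftrightarrow> (\<exists>b. is_mp_inverse a b)"

definition projection :: "'a::inv_ring \<Rightarrow> bool" where
  "projection p \<longleftrightarrow> p * p = p \<and> star p = p"

end

theory Submission
  imports Defs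
begin
lemma star_one: "star (1::'a::inv_ring) = 1"
  by (metis mult_1_left mult_1_right star_mult star_star)
lemma star_zero: "star (0::'a::inv_ring) = 0"
  by (metis add_cancel_right_right star_add)
lemma star_minus: "star (- a::'a::inv_ring) = - star a"
  by (metis add.right_inverse add_eq_0_iff star_add star_zero)
lemma star_diff: "star (a - b::'a::inv_ring) = star a - star b"
  by (metis diff_conv_add_uminus star_add star_minus)

lemmas star_simps = star_one star_zero star_minus star_diff star_add star_mult star_star

context fixes p q :: "'a::inv_ring" assumes pp: "p*p=p" and qq: "q*q=q"
  and ps: "star p = p" and qs: "star q = q"
begin
lemma pp': "p*(p*x) = p*x" using pp by (metis mult.assoc)
lemma qq': "q*(q*x) = q*x" using qq by (metis mult.assoc)
lemmas S = pp pp' qq qq' algebra_simps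
lemma t1: "(p-q)*(p-q)*p = p*((p-q)*(p-q))" by (simp add: S)
lemma t2: "(p-q)*(p-q)*q = q*((p-q)*(p-q))" by (simp add: S)
lemma t3: "p*(1-q)*star(p*(1-q)) = (p-q)*(p-q)*p" by (simp add: star_simps ps qs S)
lemma t4: "star(p*(1-q))*(p*(1-q)) = (p-q)*(p-q)*(1-q)" by (simp add: star_simps ps qs S)
lemma t5: "(p-q)*(1-q) = p*(1-q)" by (simp add: star_simps ps qs S)
lemma t6: "(p-q)*q*p = - ((p+q-1) * star(p*(1-q)))" by (simp add: star_simps ps qs S)
lemma t7: "(p+q-1)*((p-q)*(p-q)) = (p-q)*(p-q)*(p+q-1)" by (simp add: star_simps ps qs S)
lemma t8: "(p-q)*q*(1-p) = - ((p-q)*(p-q)*(1-p))" by (simp add: star_simps ps qs S)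
lemma t9: "p*(p-q) = p*(1-q)" by (simp add: star_simps ps qs S)

end

lemma sa_group:
  fixes S Z :: "'a::inv_ring"
  assumes sS: "star S = S" and SZ: "S*S*Z = S"
  shows "S*Z = star Z * S" "star (S*Z) = S*Z" "S*Z*S = S"
    "S*(star Z*S*Z) = S*Z" "star Z*S*Z*(S*Z) = star Z*S*Z"
    "star (star Z*S*Z) = star Z*S*Z"
proof -
  have SY: "star Z * S * S = S" using arg_cong[OF SZ, of star] by (simp add: star_mult sS mult.assoc)
  have "star Z * S = star Z * (S*S*Z)" using SZ by simp
  also have "\<dots> = (star Z * S * S) * Z" by (simp only: mult.assoc)
  also have "\<dots> = S * Z" using SY by simp
  finally have A: "star Z * S = S*Z" .
  show 1: "S*Z = star Z * S" using A by simp
  show 2: "star (S*Z) = S*Z" using A by (simp add: star_mult sS)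
  have "S*Z*S = star Z * S * S" using A by simp
  then show 3: "S*Z*S = S" using SY by simp
  have "S*(star Z*S*Z) = S*(S*Z*Z)" using A by simp
  also have "\<dots> = (S*S*Z)*Z" by (simp only: mult.assoc)
  also have "\<dots> = S*Z" using SZ by simp
  finally show "S*(star Z*S*Z) = S*Z" .
  have "star Z*S*Z*(S*Z) = star Z*(S*Z*S)*Z" by (simp only: mult.assoc)
  then show "star Z*S*Z*(S*Z) = star Z*S*Z" using 3 by simp
  show "star (star Z*S*Z) = star Z*S*Z" by (simp add: star_mult sS star_star mult.assoc)
qed

lemma mp_crit:
  fixes a X Y :: "'a::inv_ring"
  assumes aX: "a * star a * X = a" and aY: "Y * star a * a = a"
  shows "mp_invertible a"
proof -
  define S where "S = a * star a"
  have sS: "star S = S" by (simp add: S_def star_mult star_star)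
  have as: "star a * a * star Y = star a" using arg_cong[OF aY, of star] by (simp add: star_mult star_star mult.assoc)
  have "S*S*(X*star Y) = a * star a * (a * star a * X) * star Y" by (simp add: S_def mult.assoc)
  also have "\<dots> = a * (star a * a * star Y)" using aX by (simp add: mult.assoc)
  also have "\<dots> = S" using as S_def by simp
  finally have SZ: "S*S*(X*star Y) = S" .
  define Z where "Z = X*star Y"
  note G = sa_group[OF sS SZ[unfolded Z_def[symmetric]]]
  define G where "G = star Z*S*Z"
  have aS: "S * X = a" using aX S_def by simp
  show ?thesis unfolding mp_invertible_def is_mp_inverse_def
  proof (intro exI conjI)
    have ab: "a * (star a * G) = S*Z" using G(4) by (simp add: S_def G_def mult.assoc)
    have "a * (star a * G) * a = S*Z*(S*X)" using ab aS by simp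
    also have "\<dots> = (S*Z*S)*X" by (simp only: mult.assoc)
    also have "\<dots> = a" using G(3) aS by simp
    finally show "a * (star a * G) * a = a" .
    show "star (a * (star a * G)) = a * (star a * G)" using ab G(2) by simp
    have "star a * G * a * (star a * G) = star a * (G * (a * (star a * G)))" by (simp only: mult.assoc)
    also have "\<dots> = star a * G" using ab G(5) by (simp add: G_def)
    finally show "star a * G * a * (star a * G) = star a * G" .
    show "star (star a * G * a) = star a * G * a" using G(6) by (simp add: G_def star_mult star_star mult.assoc)
  qed
qed
context fixes p q :: "'a::inv_ring" assumes pp: "p*p=p" and qq: "q*q=q"
  and ps: "star p = p" and qs: "star q = q"
begin

lemma cstar: "star (p - q) = p - q" by (simp add: star_simps ps qs)

lemma dir12:
  assumes "mp_invertible (p*(1-q))" shows "mp_invertible (p - q)"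
proof -
  define a where "a = p*(1-q)"
  define c where "c = p - q"
  define s where "s = p + q - 1"
  obtain b where B: "a*b*a = a" "b*a*b = b" "star (a*b) = a*b" "star (b*a) = b*a"
    using assms unfolding mp_invertible_def is_mp_inverse_def a_def by blast
  have a1: "a * star a * star b = a"
  proof -
    have "a * star a * star b = a * star (b*a)" by (simp add: star_mult mult.assoc)
    also have "\<dots> = a" using B(4) B(1) by (simp add: mult.assoc)
    finally show ?thesis .
  qed
  have a2: "star a * a * b = star a"
  proof -
    have "star a = star (a*b*a)" using B(1) by simp
    also have "\<dots> = star a * star (a*b)" by (simp add: star_mult mult.assoc)
    also have "\<dots> = star a * a * b" using B(3) by (simp add: mult.assoc)
    finally show ?thesis by simp
  qed
  have T3: "a * star a = c*c*p" using t3[OF pp qq ps qs] a_def c_def by simp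
  have T4: "star a * a = c*c*(1-q)" using t4[OF pp qq ps qs] a_def c_def by simp
  have T5: "c*(1-q) = a" using t5[OF pp qq ps qs] a_def c_def by simp
  have T6: "c*q*p = - (s * star a)" using t6[OF pp qq ps qs] a_def c_def s_def by simp
  have T7: "s*(c*c) = c*c*s" using t7[OF pp qq ps qs] c_def s_def by simp
  have T8: "c*q*(1-p) = - (c*c*(1-p))" using t8[OF pp qq ps qs] c_def by simp
  define u where "u = p*star b - s*(1-q)*b - (1-p)"
  have e1: "c*(1-q) = c*c*(p*star b)" using T5 a1 T3 by (simp add: mult.assoc)
  have "c*q*p = - (s * (star a * a * b))" using T6 a2 by simp
  also have "\<dots> = - (s*(c*c)*((1-q)*b))" using T4 by (simp add: mult.assoc)
  also have "\<dots> = - (c*c*(s*(1-q)*b))" using T7 by (simp add: mult.assoc)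
  finally have e2: "c*q*p = - (c*c*(s*(1-q)*b))" .
  have "c = c*(1-q) + c*q*p + c*q*(1-p)" by (simp add: algebra_simps)
  also have "\<dots> = c*c*(p*star b) + - (c*c*(s*(1-q)*b)) + - (c*c*(1-p))" by (simp only: e1 e2 T8)
  also have "\<dots> = c*c*u" unfolding u_def by (simp only: diff_conv_add_uminus distrib_left mult_minus_right)
  finally have cu: "c*c*u = c" by simp
  have cs: "star c = c" using cstar c_def by simp
  have "star u * star c * c = star (c*c*u)" by (simp add: star_mult cs mult.assoc)
  then have cY: "star u * star c * c = c" using cu cs by simp
  have "mp_invertible c" by (rule mp_crit[of c u "star u"]) (use cu cY cs in simp_all)
  then show ?thesis using c_def by simp
qed

lemma dir21:
  assumes "mp_invertible (p - q)" shows "mp_invertible (p*(1-q))"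
proof -
  define a where "a = p*(1-q)"
  define c where "c = p - q"
  obtain x where B: "c*x*c = c" "x*c*x = x" "star (c*x) = c*x" "star (x*c) = x*c"
    using assms unfolding mp_invertible_def is_mp_inverse_def c_def by blast
  have cs: "star c = c" using cstar c_def by simp
  have cu: "c*c*star x = c"
  proof -
    have "c*c*star x = c * star (x*c)" by (simp add: star_mult cs mult.assoc)
    also have "\<dots> = c" using B(4) B(1) by (simp add: mult.assoc)
    finally show ?thesis .
  qed
  define u where "u = star x"
  have T1: "c*c*p = p*(c*c)" using t1[OF pp qq ps qs] c_def by simp
  have T3: "a * star a = c*c*p" using t3[OF pp qq ps qs] a_def c_def by simp
  have T4: "star a * a = c*c*(1-q)" using t4[OF pp qq ps qs] a_def c_def by simp
  have T5: "c*(1-q) = a" using t5[OF pp qq ps qs] a_def c_def by simp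
  have T9: "p*c = a" using t9[OF pp qq ps qs] a_def c_def by simp
  have "a * star a * u = c*c*p*u" using T3 by simp
  also have "\<dots> = p*(c*c*u)" using T1 by (simp add: mult.assoc)
  also have "\<dots> = a" using cu T9 u_def by simp
  finally have aX: "a * star a * u = a" .
  have "star u * c * c = star (c*c*u)" by (simp add: star_mult cs mult.assoc)
  then have cY: "star u * c * c = c" using cu u_def cs by simp
  have "star u * star a * a = star u * (c*c*(1-q))" using T4 by (simp add: mult.assoc)
  also have "\<dots> = (star u * c * c)*(1-q)" by (simp only: mult.assoc)
  also have "\<dots> = a" using cY T5 by simp
  finally have aY: "star u * star a * a = a" .
  show ?thesis using mp_crit[OF aX aY] a_def by simp
qed
end

lemma mp_neg1: "is_mp_inverse (- a::'a::inv_ring) b \<Longrightarrow> is_mp_inverse a (-b)"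
  unfolding is_mp_inverse_def
proof (elim conjE, intro conjI)
  assume h: "- a * b * - a = - a" "b * - a * b = b" "star (- a * b) = - a * b" "star (b * - a) = b * - a"
  show "a * - b * a = a" using h(1) by (metis minus_minus mult_minus_left mult_minus_right)
  show "- b * a * - b = - b" using h(2) by (metis minus_minus mult_minus_left mult_minus_right)
  show "star (a * - b) = a * - b" using h(3) by (metis minus_mult_commute mult_minus_left star_minus)
  show "star (- b * a) = - b * a" using h(4) by (metis minus_mult_commute mult_minus_left star_minus)
qed

lemma mp_neg: "mp_invertible (- a::'a::inv_ring) \<longleftrightarrow> mp_invertible a"
  unfolding mp_invertible_def using mp_neg1[of a] mp_neg1[of "-a"] by auto

lemma mp_iff_pq:
  fixes p q :: "'a::inv_ring"
  assumes "p*p=p" "q*q=q" "star p = p" "star q = q"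
  shows "mp_invertible (p * (1 - q)) \<longleftrightarrow> mp_invertible (p - q)"
  using dir12[OF assms] dir21[OF assms] by blast

theorem corollary2p8:
  fixes p q :: "'a::inv_ring"
  assumes "star_reducing TYPE('a)"
    and "projection p" and "projection q"
  shows "(mp_invertible (p * (1 - q)) \<longleftrightarrow> mp_invertible (p - q))
       \<and> (mp_invertible (p - q) \<longleftrightarrow> mp_invertible ((1 - p) * q))"
proof
  have P: "p*p=p" "star p = p" and Q: "q*q=q" "star q = q"
    using assms(2,3) unfolding projection_def by auto
  show "mp_invertible (p * (1 - q)) \<longleftrightarrow> mp_invertible (p - q)"
    using mp_iff_pq[OF P(1) Q(1) P(2) Q(2)] .
  have P': "(1-p)*(1-p) = 1-p" "star (1-p) = 1-p" using P by (simp_all add: algebra_simps star_simps)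
  have Q': "(1-q)*(1-q) = 1-q" "star (1-q) = 1-q" using Q by (simp_all add: algebra_simps star_simps)
  have e1: "(1-p) * (1 - (1-q)) = (1-p)*q" by simp
  have e2: "(1-p) - (1-q) = - (p - q)" by simp
  show "mp_invertible (p - q) \<longleftrightarrow> mp_invertible ((1 - p) * q)"
    using mp_iff_pq[OF P'(1) Q'(1) P'(2) Q'(2)] unfolding e1 e2 mp_neg by simp
qed

end
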